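(* Let $\Omega_{Q_3}$ be the infinite cubic lattice graph, i.e. the graph with vertex set $\mathbb{Z}^3$ in which two vertices are adjacent iff they differ by $1$ in exactly one coordinate and agree in the others. Then $12 \leq \chi_{td}(\Omega_{Q_3}) \leq 13$.
   Context: For a (possibly infinite) simple graph $G$ and a positive integer $k$, a proper $k$-total difference labeling of $G$ is a function $f: V(G)\to\{1,\dots,k\}$, extended to edges by $f(\{u,v\}) = |f(u)-f(v)|$, such that: (i) adjacent vertices receive different labels; (ii) two distinct edges sharing a vertex receive different labels; (iii) no edge receives the same label as either of its endpoints. $\chi_{td}(G)$ denotes the smallest $k$ for which $G$ has a proper $k$-total difference labeling. *)

theory Defs
  imports Main
begin

text \<open>A simple graph is given by a symmetric irreflexive adjacency relation on a type of vertices.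
  Labels are integers in the range 1..k; the label of edge {u,v} is the absolute difference.\<close>

definition proper_total_diff_labeling :: "('a \<Rightarrow> 'a \<Rightarrow> bool) \<Rightarrow> nat \<Rightarrow> ('a \<Rightarrow> int) \<Rightarrow> bool" where
  "proper_total_diff_labeling adj k f \<longleftrightarrow>
     (\<forall>v. 1 \<le> f v \<and> f v \<le> int k) \<and>
     (\<forall>u v. adj u v \<longrightarrow> f u \<noteq> f v) \<and>
     (\<forall>u v w. adj u v \<and> adj u w \<and> v \<noteq> w \<longrightarrow> \<bar>f u - f v\<bar> \<noteq> \<bar>f u - f w\<bar>) \<and>
     (\<forall>u v. adj u v \<longrightarrow> \<bar>f u - f v\<bar> \<noteq> f u \<and> \<bar>f u - f v\<bar> \<noteq> f v)"

definition chi_td :: "('a \<Rightarrow> 'a \<Rightarrow> bool) \<Rightarrow> nat" where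
  "chi_td adj = (LEAST k. 0 < k \<and> (\<exists>f. proper_total_diff_labeling adj k f))"

definition cubic_lattice_adj :: "int \<times> int \<times> int \<Rightarrow> int \<times> int \<times> int \<Rightarrow> bool" where
  "cubic_lattice_adj p q \<longleftrightarrow>
     (case p of (a, b, c) \<Rightarrow> case q of (x, y, z) \<Rightarrow>
        (\<bar>a - x\<bar> = 1 \<and> b = y \<and> c = z) \<or>
        (a = x \<and> \<bar>b - y\<bar> = 1 \<and> c = z) \<or>
        (a = x \<and> b = y \<and> \<bar>c - z\<bar> = 1))"

end

theory Submission
  imports Defs
begin

definition nb :: "int \<times> int \<times> int \<Rightarrow> (int \<times> int \<times> int) set" where
  "nb p = (case p of (a,b,c) \<Rightarrow> {(a+1,b,c),(a-1,b,c),(a,b+1,c),(a,b-1,c),(a,b,c+1),(a,b,c-1)})"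

lemma nb_adj: "q \<in> nb p \<Longrightarrow> cubic_lattice_adj p q"
  by (cases p) (auto simp: nb_def cubic_lattice_adj_def)

lemma nb_card: "card (nb p) = 6"
  by (cases p) (simp add: nb_def)

definition gd :: "int \<Rightarrow> int list \<Rightarrow> int set" where
  "gd c xs = set (map (\<lambda>v. \<bar>c - v\<bar>) (filter (\<lambda>v. v \<noteq> c \<and> v \<noteq> 2 * c \<and> c \<noteq> 2 * v) xs))"

lemma gd_card:
  assumes L: "proper_total_diff_labeling cubic_lattice_adj k f" and A: "\<forall>q. f q \<in> set xs"
  shows "6 \<le> card (gd (f p) xs)"
proof -
  let ?D = "(\<lambda>q. \<bar>f p - f q\<bar>) ` nb p"
  have inj: "inj_on (\<lambda>q. \<bar>f p - f q\<bar>) (nb p)"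
    using L nb_adj unfolding inj_on_def proper_total_diff_labeling_def by blast
  have c6: "card ?D = 6" using card_image[OF inj] nb_card by simp
  have "?D \<subseteq> gd (f p) xs"
  proof
    fix d assume "d \<in> ?D"
    then obtain q where q: "q \<in> nb p" "d = \<bar>f p - f q\<bar>" by auto
    have adj: "cubic_lattice_adj p q" using nb_adj q by auto
    have LL: "(\<forall>v. 1 \<le> f v \<and> f v \<le> int k)" "(\<forall>u v. cubic_lattice_adj u v \<longrightarrow> f u \<noteq> f v)"
      "(\<forall>u v. cubic_lattice_adj u v \<longrightarrow> \<bar>f u - f v\<bar> \<noteq> f u \<and> \<bar>f u - f v\<bar> \<noteq> f v)"
      using L unfolding proper_total_diff_labeling_def by blast+
    have "f q \<noteq> f p" "\<bar>f p - f q\<bar> \<noteq> f p" "\<bar>f p - f q\<bar> \<noteq> f q" "f q \<ge> 1" "f p \<ge> 1"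
      using LL adj by metis+
    then have "f q \<noteq> 2 * f p" "f p \<noteq> 2 * f q" by auto
    moreover have "f q \<in> set xs" using A by blast
    ultimately show "d \<in> gd (f p) xs" using q \<open>f q \<noteq> f p\<close> unfolding gd_def
      by (auto intro!: image_eqI[where x="f q"])
  qed
  then have "card ?D \<le> card (gd (f p) xs)" by (intro card_mono) (simp_all add: gd_def)
  with c6 show ?thesis by simp
qed

lemma stage:
  assumes L: "proper_total_diff_labeling cubic_lattice_adj k f" and A: "\<forall>q. f q \<in> set xs"
    and C: "card (gd c xs) < 6"
  shows "f p \<noteq> c"
  using gd_card[OF L A, of p] C by auto

lemma range11: "1 \<le> (x::int) \<Longrightarrow> x \<le> 11 \<Longrightarrow> x \<in> set [1,2,3,4,5,6,7,8,9,10,11]" by simp presburger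
lemma no11: "\<not> proper_total_diff_labeling cubic_lattice_adj 11 f"
proof
  assume L: "proper_total_diff_labeling cubic_lattice_adj 11 f"
  have A0: "\<forall>q. f q \<in> set [1,2,3,4,5,6,7,8,9,10,11]"
    using L range11 unfolding proper_total_diff_labeling_def by simp
  have "card (gd 5 [1,2,3,4,5,6,7,8,9,10,11]) < 6" unfolding gd_def card_set by simp
  then have s0_5: "\<forall>q. f q \<noteq> 5" using stage[OF L A0] by blast
  have "card (gd 6 [1,2,3,4,5,6,7,8,9,10,11]) < 6" unfolding gd_def card_set by simp
  then have s0_6: "\<forall>q. f q \<noteq> 6" using stage[OF L A0] by blast
  have A1: "\<forall>q. f q \<in> set [1,2,3,4,7,8,9,10,11]" using A0 s0_5 s0_6 by auto
  have "card (gd 4 [1,2,3,4,7,8,9,10,11]) < 6" unfolding gd_def card_set by simp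
  then have s1_4: "\<forall>q. f q \<noteq> 4" using stage[OF L A1] by blast
  have A2: "\<forall>q. f q \<in> set [1,2,3,7,8,9,10,11]" using A1 s1_4 by auto
  have "card (gd 9 [1,2,3,7,8,9,10,11]) < 6" unfolding gd_def card_set by simp
  then have s2_9: "\<forall>q. f q \<noteq> 9" using stage[OF L A2] by blast
  have A3: "\<forall>q. f q \<in> set [1,2,3,7,8,10,11]" using A2 s2_9 by auto
  have "card (gd 1 [1,2,3,7,8,10,11]) < 6" unfolding gd_def card_set by simp
  then have s3_1: "\<forall>q. f q \<noteq> 1" using stage[OF L A3] by blast
  have "card (gd 2 [1,2,3,7,8,10,11]) < 6" unfolding gd_def card_set by simp
  then have s3_2: "\<forall>q. f q \<noteq> 2" using stage[OF L A3] by blast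
  have "card (gd 7 [1,2,3,7,8,10,11]) < 6" unfolding gd_def card_set by simp
  then have s3_7: "\<forall>q. f q \<noteq> 7" using stage[OF L A3] by blast
  have A4: "\<forall>q. f q \<in> set [3,8,10,11]" using A3 s3_1 s3_2 s3_7 by auto
  have "card (gd 3 [3,8,10,11]) < 6" unfolding gd_def card_set by simp
  then have s4_3: "\<forall>q. f q \<noteq> 3" using stage[OF L A4] by blast
  have "card (gd 8 [3,8,10,11]) < 6" unfolding gd_def card_set by simp
  then have s4_8: "\<forall>q. f q \<noteq> 8" using stage[OF L A4] by blast
  have "card (gd 10 [3,8,10,11]) < 6" unfolding gd_def card_set by simp
  then have s4_10: "\<forall>q. f q \<noteq> 10" using stage[OF L A4] by blast
  have "card (gd 11 [3,8,10,11]) < 6" unfolding gd_def card_set by simp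
  then have s4_11: "\<forall>q. f q \<noteq> 11" using stage[OF L A4] by blast
  show False using A4 s4_3 s4_8 s4_10 s4_11 by (metis empty_iff empty_set set_ConsD)
qed


definition T7 :: "int \<Rightarrow> int" where
  "T7 r = (if r = 0 then 1 else if r = 1 then 3 else if r = 2 then 4 else if r = 3 then 9
     else if r = 4 then 10 else if r = 5 then 12 else 13)"

definition LL :: "int \<times> int \<times> int \<Rightarrow> int" where
  "LL p = (case p of (x,y,z) \<Rightarrow> x + 2*y + 3*z)"

definition F13 :: "int \<times> int \<times> int \<Rightarrow> int" where
  "F13 p = T7 (LL p mod 7)"

lemma r7: "(0::int) \<le> r \<Longrightarrow> r < 7 \<Longrightarrow> r = 0 \<or> r = 1 \<or> r = 2 \<or> r = 3 \<or> r = 4 \<or> r = 5 \<or> r = 6" by auto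

lemma T7_range: assumes "0 \<le> r" "r < 7" shows "1 \<le> T7 r \<and> T7 r \<le> 13"
  using r7[OF assms] by (elim disjE; simp add: T7_def)

lemma T7_inj: assumes "0 \<le> a" "a < 7" "0 \<le> b" "b < 7" "a \<noteq> b" shows "T7 a \<noteq> T7 b"
  using r7[OF assms(1,2)] r7[OF assms(3,4)] assms(5) by (elim disjE; simp add: T7_def)

lemma T7_diff: assumes "0 \<le> a" "a < 7" "0 \<le> b" "b < 7" "a \<noteq> b"
  shows "\<bar>T7 a - T7 b\<bar> \<noteq> T7 a \<and> \<bar>T7 a - T7 b\<bar> \<noteq> T7 b"
  using r7[OF assms(1,2)] r7[OF assms(3,4)] assms(5) by (elim disjE; simp add: T7_def)

lemma T7_vals: "T7 0 = 1" "T7 1 = 3" "T7 2 = 4" "T7 3 = 9" "T7 4 = 10" "T7 5 = 12" "T7 6 = 13"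
  by (simp_all add: T7_def)

lemma T7_dist: assumes "0 \<le> a" "a < 7" "0 \<le> b" "b < 7" "0 \<le> c" "c < 7"
   "a \<noteq> b" "a \<noteq> c" "b \<noteq> c" shows "\<bar>T7 a - T7 b\<bar> \<noteq> \<bar>T7 a - T7 c\<bar>"
  using r7[OF assms(1,2)] r7[OF assms(3,4)] r7[OF assms(5,6)] assms(7-9) by (elim disjE; simp add: T7_vals)
lemma adj_LL: "cubic_lattice_adj u v \<Longrightarrow> LL v - LL u \<in> {-3,-2,-1,1,2,3}"
  by (cases u; cases v) (auto simp: cubic_lattice_adj_def LL_def abs_if split: if_splits)

lemma adj_cases: assumes "cubic_lattice_adj (a,b,c) v"
  shows "v = (a+1,b,c) \<or> v = (a-1,b,c) \<or> v = (a,b+1,c) \<or> v = (a,b-1,c) \<or> v = (a,b,c+1) \<or> v = (a,b,c-1)"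
proof -
  obtain x y z where v: "v = (x,y,z)" by (cases v) auto
  have "(\<bar>a - x\<bar> = 1 \<and> b = y \<and> c = z) \<or> (a = x \<and> \<bar>b - y\<bar> = 1 \<and> c = z) \<or> (a = x \<and> b = y \<and> \<bar>c - z\<bar> = 1)"
    using assms unfolding v cubic_lattice_adj_def by simp
  then show ?thesis unfolding v by (elim disjE conjE) (simp_all add: abs_eq_iff; linarith)+
qed

lemma adj_LL_inj: assumes "cubic_lattice_adj u v" "cubic_lattice_adj u w" "LL v = LL w" shows "v = w"
proof -
  obtain a b c where u: "u = (a,b,c)" by (cases u) auto
  show ?thesis using adj_cases[OF assms(1)[unfolded u]] adj_cases[OF assms(2)[unfolded u]] assms(3)
    by (elim disjE; simp add: LL_def)
qed

lemma mod7_ne: assumes "0 < \<bar>(a::int) - b\<bar>" "\<bar>a - b\<bar> < 7" shows "a mod 7 \<noteq> b mod 7"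
proof
  assume "a mod 7 = b mod 7"
  then have "7 dvd (a - b)" by (simp add: mod_eq_dvd_iff)
  then obtain k where k: "a - b = 7 * k" by blast
  from assms show False using k by (cases "k \<ge> 1"; cases "k \<le> -1") auto
qed

lemma upper13: "proper_total_diff_labeling cubic_lattice_adj 13 F13"
proof -
  have rng: "\<And>p. 0 \<le> LL p mod 7 \<and> LL p mod 7 < 7" by simp
  have adjne: "LL u mod 7 \<noteq> LL v mod 7" if "cubic_lattice_adj u v" for u v
    using adj_LL[OF that] by (intro mod7_ne) auto
  have nbne: "LL v mod 7 \<noteq> LL w mod 7" if "cubic_lattice_adj u v" "cubic_lattice_adj u w" "v \<noteq> w" for u v w
  proof -
    have "LL v \<noteq> LL w" using adj_LL_inj that by blast
    moreover have "\<bar>LL v - LL w\<bar> < 7" using adj_LL[OF that(1)] adj_LL[OF that(2)] by auto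
    ultimately show ?thesis by (intro mod7_ne) auto
  qed
  show ?thesis unfolding proper_total_diff_labeling_def F13_def
  proof (intro conjI allI impI)
    fix v show "1 \<le> T7 (LL v mod 7)" "T7 (LL v mod 7) \<le> int 13" using T7_range rng by simp_all
  next
    fix u v assume a: "cubic_lattice_adj u v"
    show "T7 (LL u mod 7) \<noteq> T7 (LL v mod 7)" using T7_inj rng adjne[OF a] by blast
    show "\<bar>T7 (LL u mod 7) - T7 (LL v mod 7)\<bar> \<noteq> T7 (LL u mod 7)"
      "\<bar>T7 (LL u mod 7) - T7 (LL v mod 7)\<bar> \<noteq> T7 (LL v mod 7)"
      using T7_diff rng adjne[OF a] by blast+
  next
    fix u v w assume a: "cubic_lattice_adj u v \<and> cubic_lattice_adj u w \<and> v \<noteq> w"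
    show "\<bar>T7 (LL u mod 7) - T7 (LL v mod 7)\<bar> \<noteq> \<bar>T7 (LL u mod 7) - T7 (LL w mod 7)\<bar>"
      using T7_dist rng adjne a nbne by blast
  qed
qed

theorem mainTheorem5:
  shows "12 \<le> chi_td cubic_lattice_adj \<and> chi_td cubic_lattice_adj \<le> 13"
proof
  show "chi_td cubic_lattice_adj \<le> 13" unfolding chi_td_def
    using upper13 by (intro Least_le) auto
  show "12 \<le> chi_td cubic_lattice_adj" unfolding chi_td_def
  proof (rule LeastI2_wellorder_ex)
    show "\<exists>k. 0 < k \<and> (\<exists>f. proper_total_diff_labeling cubic_lattice_adj k f)"
      using upper13 by (intro exI[of _ 13]) auto
  next
    fix k assume "0 < k \<and> (\<exists>f. proper_total_diff_labeling cubic_lattice_adj k f)"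
    then obtain f where f: "proper_total_diff_labeling cubic_lattice_adj k f" by blast
    show "12 \<le> k"
    proof (rule ccontr)
      assume "\<not> 12 \<le> k"
      then have "int k \<le> 11" by simp
      have "\<forall>v. 1 \<le> f v \<and> f v \<le> int k" using f unfolding proper_total_diff_labeling_def by blast
      then have "\<forall>v. 1 \<le> f v \<and> f v \<le> 11" using \<open>int k \<le> 11\<close> by (metis order_trans)
      then have "proper_total_diff_labeling cubic_lattice_adj 11 f"
        using f unfolding proper_total_diff_labeling_def by simp
      with no11 show False by blast
    qed
  qed
qed

end
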